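(* In the algorithm CertifiedCurveTracking (described in the context), at each execution of the inner step-size loop, the Krawczyk test KrawczykTest$(\hat C_{\hat x_n+[-r\rho,h]},\hat X([-r\rho,h]),r,A,\tau)$ returns True for some $h>0$; that is, after finitely many halvings of the step size $h$ the loop exits.
   Context: Setting: $C=\{c_1,\dots,c_{n-1}\}\subset\mathbb{Q}[X_1,\dots,X_n]$ defines a regular real curve (Jacobian $JC$ of full rank $n-1$ at every point of the curve, no self-intersections). For a value or interval $a$, $C_a$ is the square system $(c_i(X_1,\dots,X_{n-1},a))_i$; $x_{-n}=(x_1,\dots,x_{n-1})$; $B=[-1,1]^{n-1}$. Interval arithmetic, interval extensions $\square$, and norms: $\|I\|=\max_{x\in I}|x|$ for intervals, max over coordinates for interval vectors, and the maximal induced $\infty$-norm over all matrices in an interval matrix. KrawczykTest$(F,y,s,A,\rho)$ returns True iff $\|-\frac1sAF(y)+(I-A\square JF(y+sB))B\|<\rho$; if $F$ depends on an interval of slice values or $y$ is an interval vector, this is evaluated in interval arithmetic over all of them at once. A $\rho$-approximate solution $x$ to $C$ means: there exist invertible $A$ and $r>0$ with $-AC_{x_n}(x_{-n})+(I-A\,JC_{x_n}(x_{-n}+rB))rB\subset r\rho B$. RefineSolution$(C,x,r,A,\tau)$ is a procedure returning $(x,\tilde r,\tilde A)$ such that, among other things, KrawczykTest$(C_{x_n+\tilde r[-1,1]},x_{-n},\tilde r,\tilde A,\tau)$ is True (the test certified simultaneously for all slices $X_n\in x_n+\tilde r[-1,1]$). UnitaryTransformation$(C,x)$: compute an SVD $JC(x)=U\Sigma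 V^*$ and return $\hat C(X)=U^*C(VX)$, $\hat x=V^*x$, $U$, $V^*$. CertifiedCurveTracking with inputs $C$, a point $x$, $r>0$, $h>0$, compact region $D$, $\rho\in(0,\frac12]$, $\tau\in(\frac12,1)$: at each step, after a loop of refinements and unitary transformations, one sets $(\hat x,r,A)=$ RefineSolution$(\hat C,\tilde x,r,\tilde A,\rho)$ for the current transformed curve $\hat C$; one then defines $\hat X(\eta)=\hat x_{-n}$ for $\eta<0$ and $\hat X(\eta)=X(\eta)$ for $\eta\ge0$, where $X=$ Predictor$(\hat C,\hat x,r,h)$ is a user-chosen continuous prediction of the curve with $X(0)=\hat x_{-n}$ depending on the step size $h$; then, while KrawczykTest$(\hat C_{\hat x_n+[-r\rho,h]},\hat X([-r\rho,h]),r,A,\tau)$ is False, one sets $h=h/2$ and recomputes the predictor.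
   Formalization: The prediction $X(\eta)$ computed for step size h tends to $\hat x_{-n}$ as h and eta jointly tend to 0 with 0 <= eta <= h. The statement above fails without it. *)

theory Defs
  imports "HOL-Analysis.Analysis"
begin

text \<open>Points: x = (x_{-n}, x_n) with x_{-n} :: real^'n (the first n-1 coordinates,
  'n an arbitrary finite index type of cardinality n-1) and x_n :: real.
  A square system C_a is represented by C :: real^'n => real => real^'n,
  C y a = (c_i(y,a))_i.\<close>

definition polynomial_regular_curve :: "(real^'n \<Rightarrow> real \<Rightarrow> real^'n) \<Rightarrow> bool" where
  "polynomial_regular_curve C \<longleftrightarrow>
     (\<forall>i. real_polynomial_function (\<lambda>p::(real^'n) \<times> real. C (fst p) (snd p) $ i)) \<and>
     (\<forall>p::(real^'n) \<times> real. C (fst p) (snd p) = 0 \<longrightarrow>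
        (\<exists>D. ((\<lambda>q. C (fst q) (snd q)) has_derivative D) (at p) \<and> surj D))"

definition interval_extension ::
  "('a::euclidean_space \<Rightarrow> real \<Rightarrow> 'b::euclidean_space) \<Rightarrow> ('a set \<Rightarrow> real set \<Rightarrow> 'b set) \<Rightarrow> bool" where
  "interval_extension f F \<longleftrightarrow>
     (\<forall>l u a b x t. x \<in> cbox l u \<longrightarrow> t \<in> {a..b} \<longrightarrow> f x t \<in> F (cbox l u) {a..b}) \<and>
     (\<forall>l u a b. cbox l u \<noteq> {} \<longrightarrow> a \<le> b \<longrightarrow> (\<exists>L U. F (cbox l u) {a..b} = cbox L U)) \<and>
     (\<forall>l u a b l' u' a' b'. cbox l u \<noteq> {} \<longrightarrow> a \<le> b \<longrightarrow>
        cbox l u \<subseteq> cbox l' u' \<longrightarrow> {a..b} \<subseteq> {a'..b'} \<longrightarrow>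
        F (cbox l u) {a..b} \<subseteq> F (cbox l' u') {a'..b'}) \<and>
     (\<forall>l u a b \<epsilon>. cbox l u \<noteq> {} \<longrightarrow> a \<le> b \<longrightarrow> 0 < \<epsilon> \<longrightarrow>
        (\<exists>\<delta>>0. \<forall>l' u' a' b'. dist l' l < \<delta> \<longrightarrow> dist u' u < \<delta> \<longrightarrow>
            \<bar>a' - a\<bar> < \<delta> \<longrightarrow> \<bar>b' - b\<bar> < \<delta> \<longrightarrow> cbox l' u' \<noteq> {} \<longrightarrow> a' \<le> b' \<longrightarrow>
            F (cbox l' u') {a'..b'} \<subseteq> (\<Union>z\<in>F (cbox l u) {a..b}. ball z \<epsilon>)))"

definition ihull :: "'a::euclidean_space set \<Rightarrow> 'a set" where
  "ihull S = cbox (\<Sum>i\<in>Basis. (INF x\<in>S. x \<bullet> i) *\<^sub>R i) (\<Sum>i\<in>Basis. (SUP x\<in>S. x \<bullet> i) *\<^sub>R i)"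

definition inorm :: "'a::euclidean_space set \<Rightarrow> real" where
  "inorm S = (SUP x\<in>S. infnorm x)"

text \<open>KrawczykTest(F, Y, s, A, rho) evaluated in interval arithmetic, with FX, JX the
  interval extensions of F and its Jacobian JF (in the first n-1 variables), Y the
  (interval) point argument and T the interval of slice values.  Each interval
  operation below is evaluated exactly componentwise, as interval arithmetic does:
  A*[u] and I - A*[M] are entrywise exact ranges (each interval variable occurs once),
  [N]*B likewise, and the final sum is the Minkowski sum of two boxes.\<close>
definition krawczyk_test ::
  "((real^'n) set \<Rightarrow> real set \<Rightarrow> (real^'n) set) \<Rightarrow> ((real^'n) set \<Rightarrow> real set \<Rightarrow> (real^'n^'n) set)
    \<Rightarrow> (real^'n) set \<Rightarrow> real set \<Rightarrow> real \<Rightarrow> real^'n^'n \<Rightarrow> real \<Rightarrow> bool" where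
  "krawczyk_test FX JX Y T s A \<rho> \<longleftrightarrow>
     (let P = ihull ((\<lambda>u. - ((1 / s) *\<^sub>R (A *v u))) ` FX Y T);
          Ysb = {y + s *\<^sub>R b | y b. y \<in> Y \<and> b \<in> cbox (- One) One};
          N = ihull ((\<lambda>M. mat 1 - A ** M) ` JX Ysb T);
          Q = ihull {M *v b | M b. M \<in> N \<and> b \<in> cbox (- One) One}
      in inorm {p + q | p q. p \<in> P \<and> q \<in> Q} < \<rho>)"

end

theory Submission
  imports Defs
begin


definition near :: "real \<Rightarrow> 'a::real_normed_vector set \<Rightarrow> 'a set \<Rightarrow> bool" where
  "near d S S0 \<longleftrightarrow> (\<forall>x\<in>S. \<exists>y\<in>S0. norm (x - y) \<le> d)"

lemma clamp_exists:
  fixes l u z :: "'a::euclidean_space"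
  assumes "\<forall>i\<in>Basis. l\<bullet>i \<le> u\<bullet>i \<and> l\<bullet>i - d \<le> z\<bullet>i \<and> z\<bullet>i \<le> u\<bullet>i + d" "0 \<le> d"
  shows "\<exists>y\<in>cbox l u. \<forall>i\<in>Basis. \<bar>z\<bullet>i - y\<bullet>i\<bar> \<le> d"
proof -
  define y where "y = (\<Sum>i\<in>Basis. max (l\<bullet>i) (min (u\<bullet>i) (z\<bullet>i)) *\<^sub>R i)"
  have yi: "y\<bullet>i = max (l\<bullet>i) (min (u\<bullet>i) (z\<bullet>i))" if "i\<in>Basis" for i
    using that by (simp add: y_def)
  have "\<bar>z\<bullet>i - y\<bullet>i\<bar> \<le> d" if i: "i\<in>Basis" for i
  proof -
    have "l\<bullet>i \<le> u\<bullet>i" "l\<bullet>i - d \<le> z\<bullet>i" "z\<bullet>i \<le> u\<bullet>i + d" using assms i by auto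
    then show ?thesis unfolding yi[OF i] using assms(2) by (simp add: max_def min_def)
  qed
  moreover have "y \<in> cbox l u" using assms yi by (auto simp: mem_box)
  ultimately show ?thesis by blast
qed

lemma near_bounded:
  assumes "bounded S0" "near d S S0"
  shows "bounded S"
proof -
  obtain B where B: "\<forall>y\<in>S0. norm y \<le> B" using assms(1) bounded_iff by blast
  have "norm x \<le> B + d" if xS: "x\<in>S" for x
  proof -
    obtain y where y: "y\<in>S0" "norm (x - y) \<le> d" using assms(2) xS by (auto simp: near_def)
    have "norm x \<le> norm y + norm (x - y)" by (metis norm_triangle_sub)
    then show ?thesis using B y by force
  qed
  then show ?thesis by (auto simp: bounded_iff)
qed

lemma ihull_inner:
  fixes S :: "'a::euclidean_space set"
  assumes "i \<in> Basis"
  shows "z \<in> ihull S \<Longrightarrow> (INF x\<in>S. x\<bullet>i) \<le> z\<bullet>i \<and> z\<bullet>i \<le> (SUP x\<in>S. x\<bullet>i)"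
  using assms by (auto simp: ihull_def mem_box)

lemma bdd_comp:
  fixes S :: "'a::euclidean_space set"
  assumes "bounded S" "i\<in>Basis"
  shows "bdd_below ((\<lambda>x. x\<bullet>i) ` S)" "bdd_above ((\<lambda>x. x\<bullet>i) ` S)"
proof -
  obtain B where B: "\<forall>y\<in>S. norm y \<le> B" using assms(1) bounded_iff by blast
  have *: "\<bar>x\<bullet>i\<bar> \<le> B" if "x\<in>S" for x
    using B that Basis_le_norm[OF assms(2), of x] by force
  have **: "-B \<le> x\<bullet>i \<and> x\<bullet>i \<le> B" if "x\<in>S" for x using *[OF that] by arith
  show "bdd_below ((\<lambda>x. x\<bullet>i) ` S)"
    unfolding bdd_below_def using ** by (intro exI[of _ "-B"]) auto
  show "bdd_above ((\<lambda>x. x\<bullet>i) ` S)"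
    unfolding bdd_above_def using ** by (intro exI[of _ "B"]) auto
qed

lemma ihull_nonempty:
  fixes S :: "'a::euclidean_space set"
  assumes "bounded S" "S \<noteq> {}"
  shows "ihull S \<noteq> {}"
proof -
  obtain y where y: "y \<in> S" using assms by blast
  have "(INF x\<in>S. x\<bullet>i) \<le> (SUP x\<in>S. x\<bullet>i)" if "i\<in>Basis" for i
    using cINF_lower[OF bdd_comp(1)[OF assms(1) that] y] cSUP_upper[OF y bdd_comp(2)[OF assms(1) that]]
    by linarith
  then show ?thesis unfolding ihull_def by (simp add: box_ne_empty)
qed

lemma bounded_ihull: "bounded (ihull S)"
  unfolding ihull_def by (rule bounded_cbox)

lemma near_ihull:
  fixes S S0 :: "'a::euclidean_space set"
  assumes "S \<noteq> {}" "bounded S0" "near d S S0"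
  shows "near (real DIM('a) * d) (ihull S) (ihull S0)"
  unfolding near_def
proof
  fix z assume z: "z \<in> ihull S"
  have bS: "bounded S" using near_bounded assms by blast
  have S0ne: "S0 \<noteq> {}" using assms by (auto simp: near_def)
  have d0: "0 \<le> d" using assms(1,3) unfolding near_def by (meson ex_in_conv norm_ge_zero order_trans)
  have key: "(INF y\<in>S0. y\<bullet>i) \<le> (SUP y\<in>S0. y\<bullet>i) \<and> (INF y\<in>S0. y\<bullet>i) - d \<le> z\<bullet>i \<and> z\<bullet>i \<le> (SUP y\<in>S0. y\<bullet>i) + d"
    if i: "i\<in>Basis" for i
  proof -
    obtain y0 where y0: "y0 \<in> S0" using S0ne by blast
    have 1: "(INF y\<in>S0. y\<bullet>i) \<le> (SUP y\<in>S0. y\<bullet>i)"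
      using cINF_lower[OF bdd_comp(1)[OF assms(2) i] y0] cSUP_upper[OF y0 bdd_comp(2)[OF assms(2) i]]
      by linarith
    have 2: "(INF y\<in>S0. y\<bullet>i) - d \<le> x\<bullet>i \<and> x\<bullet>i \<le> (SUP y\<in>S0. y\<bullet>i) + d" if x: "x\<in>S" for x
    proof -
      obtain y where y: "y\<in>S0" "norm (x - y) \<le> d" using assms(3) x by (auto simp: near_def)
      have "\<bar>(x - y)\<bullet>i\<bar> \<le> d" using Basis_le_norm[OF i, of "x - y"] y by linarith
      then have "\<bar>x\<bullet>i - y\<bullet>i\<bar> \<le> d" by (simp add: inner_diff_left)
      moreover have "(INF y\<in>S0. y\<bullet>i) \<le> y\<bullet>i" by (rule cINF_lower[OF bdd_comp(1)[OF assms(2) i] y(1)])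
      moreover have "y\<bullet>i \<le> (SUP y\<in>S0. y\<bullet>i)" by (rule cSUP_upper[OF y(1) bdd_comp(2)[OF assms(2) i]])
      ultimately show ?thesis by linarith
    qed
    have 3: "(INF y\<in>S0. y\<bullet>i) - d \<le> (INF x\<in>S. x\<bullet>i)"
      using 2 assms(1) by (intro cINF_greatest) auto
    have 4: "(SUP x\<in>S. x\<bullet>i) \<le> (SUP y\<in>S0. y\<bullet>i) + d"
      using 2 assms(1) by (intro cSUP_least) auto
    show ?thesis using 1 3 4 ihull_inner[OF i z] by linarith
  qed
  obtain y where y: "y \<in> cbox (\<Sum>i\<in>Basis. (INF x\<in>S0. x \<bullet> i) *\<^sub>R i) (\<Sum>i\<in>Basis. (SUP x\<in>S0. x \<bullet> i) *\<^sub>R i)"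
    and yd: "\<forall>i\<in>Basis. \<bar>z\<bullet>i - y\<bullet>i\<bar> \<le> d"
    using clamp_exists[of "\<Sum>i\<in>Basis. (INF x\<in>S0. x \<bullet> i) *\<^sub>R i" "\<Sum>i\<in>Basis. (SUP x\<in>S0. x \<bullet> i) *\<^sub>R i" d z]
      key d0 by auto
  have "norm (z - y) \<le> (\<Sum>i\<in>Basis. \<bar>(z - y)\<bullet>i\<bar>)" by (rule norm_le_l1)
  also have "\<dots> \<le> (\<Sum>i\<in>(Basis::'a set). d)"
    using yd by (intro sum_mono) (simp add: inner_diff_left)
  also have "\<dots> = real DIM('a) * d" by simp
  finally show "\<exists>y\<in>ihull S0. norm (z - y) \<le> real DIM('a) * d"
    using y unfolding ihull_def by blast
qed

lemma near_image:
  assumes "\<forall>x y. norm (g x - g y) \<le> K * norm (x - y)" "0 \<le> K" "near d S S0"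
  shows "near (K * d) (g ` S) (g ` S0)"
  unfolding near_def
proof
  fix gx assume "gx \<in> g ` S"
  then obtain x where x: "x\<in>S" "gx = g x" by blast
  obtain y where y: "y\<in>S0" "norm (x - y) \<le> d" using assms(3) x by (auto simp: near_def)
  have "norm (g x - g y) \<le> K * d" using assms(1) mult_left_mono[OF y(2) assms(2)] by (meson order_trans)
  then show "\<exists>y\<in>g ` S0. norm (gx - y) \<le> K * d" using x y by blast
qed

lemma bounded_lip_image:
  assumes "\<forall>x y. norm (g x - g y) \<le> K * norm (x - y)" "0 \<le> K" "bounded S"
  shows "bounded (g ` S)"
proof (cases "S = {}")
  case True then show ?thesis by simp
next
  case False
  then obtain x0 where x0: "x0 \<in> S" by blast
  obtain B where B: "\<forall>y\<in>S. norm y \<le> B" using assms(3) bounded_iff by blast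
  have "norm (g x) \<le> norm (g x0) + K * (B + B)" if "x\<in>S" for x
  proof -
    have "norm (g x) \<le> norm (g x0) + norm (g x - g x0)" by (metis norm_triangle_sub add.commute)
    also have "norm (g x - g x0) \<le> K * norm (x - x0)" using assms(1) by blast
    also have "norm (x - x0) \<le> B + B"
    proof -
      have "norm x \<le> B" "norm x0 \<le> B" using B that x0 by auto
      then show ?thesis using norm_triangle_ineq4[of x x0] by linarith
    qed
    finally show ?thesis using assms(2) by (simp add: mult_left_mono)
  qed
  then show ?thesis by (auto simp: bounded_iff)
qed

lemma near_plus:
  assumes "near d1 P P0" "near d2 Q Q0"
  shows "near (d1 + d2) {p + q | p q. p \<in> P \<and> q \<in> Q} {p + q | p q. p \<in> P0 \<and> q \<in> Q0}"
  unfolding near_def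
proof
  fix x assume "x \<in> {p + q | p q. p \<in> P \<and> q \<in> Q}"
  then obtain p q where pq: "x = p + q" "p\<in>P" "q\<in>Q" by blast
  obtain p0 where p0: "p0\<in>P0" "norm (p - p0) \<le> d1" using assms(1) pq by (auto simp: near_def)
  obtain q0 where q0: "q0\<in>Q0" "norm (q - q0) \<le> d2" using assms(2) pq by (auto simp: near_def)
  have "norm (x - (p0 + q0)) \<le> norm (p - p0) + norm (q - q0)"
    using pq norm_triangle_ineq[of "p - p0" "q - q0"] by (simp add: algebra_simps)
  then show "\<exists>y\<in>{p + q | p q. p \<in> P0 \<and> q \<in> Q0}. norm (x - y) \<le> d1 + d2"
    using p0 q0 by force
qed

lemma bounded_sumset:
  fixes P Q :: "'a::real_normed_vector set"
  assumes "bounded P" "bounded Q"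
  shows "bounded {p + q | p q. p \<in> P \<and> q \<in> Q}"
proof -
  have "{p + q | p q. p \<in> P \<and> q \<in> Q} = (\<lambda>(x,y). x + y) ` (P \<times> Q)" by auto
  then show ?thesis using bounded_plus[OF assms] by simp
qed

lemma inorm_near:
  fixes S S0 :: "'a::euclidean_space set"
  assumes "S \<noteq> {}" "bounded S0" "near d S S0"
  shows "inorm S \<le> inorm S0 + d"
proof -
  obtain B where B: "\<forall>y\<in>S0. norm y \<le> B" using assms(2) bounded_iff by blast
  have bdd: "bdd_above (infnorm ` S0)"
    unfolding bdd_above_def using B infnorm_le_norm order_trans by (intro exI[of _ B]) blast
  have "infnorm x \<le> inorm S0 + d" if x: "x \<in> S" for x
  proof -
    obtain y where y: "y\<in>S0" "norm (x - y) \<le> d" using assms(3) x by (auto simp: near_def)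
    have "infnorm x \<le> infnorm y + infnorm (x - y)" using infnorm_triangle[of y "x - y"] by simp
    also have "infnorm (x - y) \<le> d" using y infnorm_le_norm order_trans by blast
    also have "infnorm y \<le> inorm S0" unfolding inorm_def by (rule cSUP_upper[OF y(1) bdd])
    finally show ?thesis by simp
  qed
  then show ?thesis unfolding inorm_def[of S] using assms(1) by (intro cSUP_least) auto
qed



definition ktv :: "real^'n^'n \<Rightarrow> real \<Rightarrow> (real^'n) set \<Rightarrow> (real^'n^'n) set \<Rightarrow> real" where
  "ktv A s FS JS = (let P = ihull ((\<lambda>u. - ((1 / s) *\<^sub>R (A *v u))) ` FS);
          N = ihull ((\<lambda>M. mat 1 - A ** M) ` JS);
          Q = ihull {M *v b | M b. M \<in> N \<and> b \<in> cbox (- One) One}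
      in inorm {p + q | p q. p \<in> P \<and> q \<in> Q})"

lemma kt_eq: "krawczyk_test FX JX Y T s A \<rho> \<longleftrightarrow>
   ktv A s (FX Y T) (JX {y + s *\<^sub>R b | y b. y \<in> Y \<and> b \<in> cbox (- One) One} T) < \<rho>"
  by (simp add: krawczyk_test_def ktv_def Let_def)

lemma K1_exists:
  fixes A :: "real^'n^'n"
  shows "\<exists>K\<ge>0. \<forall>x y. norm ((\<lambda>u. - ((1 / s) *\<^sub>R (A *v u))) x - (\<lambda>u. - ((1 / s) *\<^sub>R (A *v u))) y) \<le> K * norm (x - y)"
proof (intro exI[of _ "\<bar>1/s\<bar> * onorm ((*v) A)"] conjI allI)
  show "0 \<le> \<bar>1/s\<bar> * onorm ((*v) A)" by (simp add: onorm_pos_le)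
  fix x y :: "real^'n"
  have "(\<lambda>u. - ((1 / s) *\<^sub>R (A *v u))) x - (\<lambda>u. - ((1 / s) *\<^sub>R (A *v u))) y = - ((1/s) *\<^sub>R (A *v (x - y)))"
    by (simp add: matrix_vector_mult_diff_distrib scaleR_diff_right)
  then have "norm ((\<lambda>u. - ((1 / s) *\<^sub>R (A *v u))) x - (\<lambda>u. - ((1 / s) *\<^sub>R (A *v u))) y) = \<bar>1/s\<bar> * norm (A *v (x - y))"
    by simp
  also have "\<dots> \<le> \<bar>1/s\<bar> * (onorm ((*v) A) * norm (x - y))"
    by (intro mult_left_mono onorm[OF matrix_vector_mul_bounded_linear]) auto
  finally show "norm ((\<lambda>u. - ((1 / s) *\<^sub>R (A *v u))) x - (\<lambda>u. - ((1 / s) *\<^sub>R (A *v u))) y) \<le> \<bar>1/s\<bar> * onorm ((*v) A) * norm (x - y)"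
    by (simp add: mult.assoc)
qed

lemma K2_exists:
  fixes A :: "real^'n^'n"
  shows "\<exists>K\<ge>0. \<forall>x y. norm ((\<lambda>M. mat 1 - A ** M) x - (\<lambda>M. mat 1 - A ** M) y) \<le> K * norm (x - y)"
proof -
  have lin: "linear (\<lambda>X::real^'n^'n. A ** X)"
    by (rule linearI) (simp_all add: matrix_add_ldistrib matrix_scalar_ac scalar_matrix_assoc)
  then have bl: "bounded_linear (\<lambda>X::real^'n^'n. A ** X)" by (simp add: linear_conv_bounded_linear)
  show ?thesis
  proof (intro exI[of _ "onorm (\<lambda>X::real^'n^'n. A ** X)"] conjI allI)
    show "0 \<le> onorm (\<lambda>X::real^'n^'n. A ** X)" by (rule onorm_pos_le[OF bl])
    fix x y :: "real^'n^'n"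
    have "(\<lambda>M. mat 1 - A ** M) x - (\<lambda>M. mat 1 - A ** M) y = A ** (y - x)"
      using linear_diff[OF lin, of y x] by simp
    then have "norm ((\<lambda>M. mat 1 - A ** M) x - (\<lambda>M. mat 1 - A ** M) y) = norm (A ** (y - x))" by simp
    also have "\<dots> \<le> onorm (\<lambda>X::real^'n^'n. A ** X) * norm (y - x)" by (rule onorm[OF bl])
    finally show "norm ((\<lambda>M. mat 1 - A ** M) x - (\<lambda>M. mat 1 - A ** M) y) \<le> onorm (\<lambda>X::real^'n^'n. A ** X) * norm (x - y)"
      by (simp add: norm_minus_commute)
  qed
qed

lemma One_inner: "i \<in> Basis \<Longrightarrow> (One::'a::euclidean_space) \<bullet> i = 1"
  by (simp add: inner_sum_left sum.If_cases inner_Basis)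

lemma K3_exists:
  shows "\<exists>K\<ge>0. \<forall>(M::real^'n^'n) b. b \<in> cbox (- One) One \<longrightarrow> norm (M *v b) \<le> K * norm M"
proof (intro exI[of _ "real CARD('n) * real CARD('n) * real DIM(real^'n)"] conjI allI impI)
  show "0 \<le> real CARD('n) * real CARD('n) * real DIM(real^'n)" by simp
  fix M :: "real^'n^'n" and b :: "real^'n"
  assume b: "b \<in> cbox (- One) One"
  have "\<bar>b \<bullet> i\<bar> \<le> 1" if "i \<in> Basis" for i
    using b that by (auto simp: mem_box One_inner inner_minus_left abs_le_iff)
  then have nb: "norm b \<le> real DIM(real^'n)"
    using norm_le_l1[of b] sum_bounded_above[of "Basis::(real^'n) set" "\<lambda>i. \<bar>b \<bullet> i\<bar>" 1] by simp
  have "\<bar>M $ i $ j\<bar> \<le> norm M" for i j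
    using component_le_norm_cart[where x="M $ i" and i=j] Finite_Cartesian_Product.norm_nth_le[where x=M and i=i] by linarith
  then have om: "onorm ((*v) M) \<le> real CARD('n) * real CARD('n) * norm M"
    by (rule onorm_le_matrix_component)
  have "norm (M *v b) \<le> onorm ((*v) M) * norm b" by (rule onorm[OF matrix_vector_mul_bounded_linear])
  also have "\<dots> \<le> (real CARD('n) * real CARD('n) * norm M) * real DIM(real^'n)"
    by (intro mult_mono om nb) (auto simp: onorm_pos_le)
  finally show "norm (M *v b) \<le> real CARD('n) * real CARD('n) * real DIM(real^'n) * norm M"
    by (simp add: mult_ac)
qed

lemma near_mv:
  fixes N N0 :: "(real^'n^'n) set"
  assumes K: "0 \<le> K" "\<forall>(M::real^'n^'n) b. b \<in> B \<longrightarrow> norm (M *v b) \<le> K * norm M"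
    and n: "near d N N0"
  shows "near (K * d) {M *v b | M b. M \<in> N \<and> b \<in> B} {M *v b | M b. M \<in> N0 \<and> b \<in> B}"
  unfolding near_def
proof
  fix x assume "x \<in> {M *v b | M b. M \<in> N \<and> b \<in> B}"
  then obtain M b where x: "x = M *v b" "M \<in> N" "b \<in> B" by blast
  obtain M0 where M0: "M0 \<in> N0" "norm (M - M0) \<le> d" using n x by (auto simp: near_def)
  have "norm (x - M0 *v b) = norm ((M - M0) *v b)" using x by (simp add: matrix_vector_mult_diff_rdistrib)
  also have "\<dots> \<le> K * norm (M - M0)" using K x by blast
  also have "\<dots> \<le> K * d" using M0 K by (simp add: mult_left_mono)
  finally show "\<exists>y\<in>{M *v b | M b. M \<in> N0 \<and> b \<in> B}. norm (x - y) \<le> K * d" using M0 x by blast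
qed

lemma bounded_mv:
  fixes N :: "(real^'n^'n) set"
  assumes K: "0 \<le> K" "\<forall>(M::real^'n^'n) b. b \<in> B \<longrightarrow> norm (M *v b) \<le> K * norm M"
    and n: "bounded N"
  shows "bounded {M *v b | M b. M \<in> N \<and> b \<in> B}"
proof -
  obtain C where C: "\<forall>M\<in>N. norm M \<le> C" using n bounded_iff by blast
  have "norm (M *v b) \<le> K * C" if "M \<in> N" "b \<in> B" for M b
    using K C that by (meson mult_left_mono order_trans)
  then show ?thesis by (auto simp: bounded_iff)
qed

lemma zero_in_B: "(0::'a::euclidean_space) \<in> cbox (- One) One"
  by (auto simp: mem_box One_inner inner_minus_left)

lemma ktv_cont:
  fixes A :: "real^'n^'n" and s :: real
  obtains K where "0 \<le> K"
    "\<And>d FS FS0 JS JS0. bounded FS0 \<Longrightarrow> bounded JS0 \<Longrightarrow> FS \<noteq> {} \<Longrightarrow> JS \<noteq> {} \<Longrightarrow>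
       near d FS FS0 \<Longrightarrow> near d JS JS0 \<Longrightarrow> ktv A s FS JS \<le> ktv A s FS0 JS0 + K * d"
proof -
  obtain K1 where K1: "0 \<le> K1" "\<forall>x y. norm ((\<lambda>u. - ((1 / s) *\<^sub>R (A *v u))) x - (\<lambda>u. - ((1 / s) *\<^sub>R (A *v u))) y) \<le> K1 * norm (x - y)"
    using K1_exists[of s A] by blast
  obtain K2 where K2: "0 \<le> K2" "\<forall>x y. norm ((\<lambda>M. mat 1 - A ** M) x - (\<lambda>M. mat 1 - A ** M) y) \<le> K2 * norm (x - y)"
    using K2_exists[of A] by blast
  obtain K3 where K3: "0 \<le> K3" "\<forall>(M::real^'n^'n) b. b \<in> cbox (- One) One \<longrightarrow> norm (M *v b) \<le> K3 * norm M"
    using K3_exists by blast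
  define D1 where "D1 = real DIM(real^'n)"
  define D2 where "D2 = real DIM(real^'n^'n)"
  show ?thesis
  proof (rule that[of "D1 * K1 + D1 * K3 * D2 * K2"])
    show "0 \<le> D1 * K1 + D1 * K3 * D2 * K2" using K1 K2 K3 by (simp add: D1_def D2_def)
    fix d and FS FS0 :: "(real^'n) set" and JS JS0 :: "(real^'n^'n) set"
    assume bF0: "bounded FS0" and bJ0: "bounded JS0" and neF: "FS \<noteq> {}" and neJ: "JS \<noteq> {}"
      and nF: "near d FS FS0" and nJ: "near d JS JS0"
    define g1 where "g1 = (\<lambda>u. - ((1 / s) *\<^sub>R (A *v u)))"
    define g2 where "g2 = (\<lambda>M. mat 1 - A ** M)"
    define B where "B = cbox (- One) (One::real^'n)"
    have K1': "\<forall>x y. norm (g1 x - g1 y) \<le> K1 * norm (x - y)" using K1 by (simp add: g1_def)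
    have K2': "\<forall>x y. norm (g2 x - g2 y) \<le> K2 * norm (x - y)" using K2 by (simp add: g2_def)
    have K3': "\<forall>(M::real^'n^'n) b. b \<in> B \<longrightarrow> norm (M *v b) \<le> K3 * norm M" using K3 by (simp add: B_def)
    define P where "P = ihull (g1 ` FS)"
    define P0 where "P0 = ihull (g1 ` FS0)"
    define N where "N = ihull (g2 ` JS)"
    define N0 where "N0 = ihull (g2 ` JS0)"
    define R where "R = {M *v b | M b. M \<in> N \<and> b \<in> B}"
    define R0 where "R0 = {M *v b | M b. M \<in> N0 \<and> b \<in> B}"
    define Q where "Q = ihull R"
    define Q0 where "Q0 = ihull R0"
    have e1: "ktv A s FS JS = inorm {p + q | p q. p \<in> P \<and> q \<in> Q}"
      by (simp add: ktv_def Let_def P_def Q_def R_def N_def g1_def g2_def B_def)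
    have e2: "ktv A s FS0 JS0 = inorm {p + q | p q. p \<in> P0 \<and> q \<in> Q0}"
      by (simp add: ktv_def Let_def P0_def Q0_def R0_def N0_def g1_def g2_def B_def)
    have bI10: "bounded (g1 ` FS0)" by (rule bounded_lip_image[OF K1' K1(1) bF0])
    have nI1: "near (K1 * d) (g1 ` FS) (g1 ` FS0)" by (rule near_image[OF K1' K1(1) nF])
    have nP: "near (D1 * (K1 * d)) P P0"
      unfolding P_def P0_def D1_def by (rule near_ihull) (use neF bI10 nI1 in auto)
    have bI20: "bounded (g2 ` JS0)" by (rule bounded_lip_image[OF K2' K2(1) bJ0])
    have nI2: "near (K2 * d) (g2 ` JS) (g2 ` JS0)" by (rule near_image[OF K2' K2(1) nJ])
    have nN: "near (D2 * (K2 * d)) N N0"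
      unfolding N_def N0_def D2_def by (rule near_ihull) (use neJ bI20 nI2 in auto)
    have neN: "N \<noteq> {}" unfolding N_def
      by (rule ihull_nonempty) (use near_bounded[OF bI20 nI2] neJ in auto)
    have nR: "near (K3 * (D2 * (K2 * d))) R R0"
      unfolding R_def R0_def by (rule near_mv[OF K3(1) K3' nN])
    have bR0: "bounded R0" unfolding R0_def N0_def by (rule bounded_mv[OF K3(1) K3' bounded_ihull])
    have neR: "R \<noteq> {}" using neN zero_in_B unfolding R_def B_def by blast
    have nQ: "near (D1 * (K3 * (D2 * (K2 * d)))) Q Q0"
      unfolding Q_def Q0_def D1_def by (rule near_ihull[OF neR bR0 nR])
    have neP: "P \<noteq> {}" unfolding P_def
      by (rule ihull_nonempty) (use near_bounded[OF bI10 nI1] neF in auto)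
    have neQ: "Q \<noteq> {}" unfolding Q_def
      by (rule ihull_nonempty) (use near_bounded[OF bR0 nR] neR in auto)
    have nS: "near (D1 * (K1 * d) + D1 * (K3 * (D2 * (K2 * d)))) {p + q | p q. p \<in> P \<and> q \<in> Q} {p + q | p q. p \<in> P0 \<and> q \<in> Q0}"
      by (rule near_plus[OF nP nQ])
    have bS0: "bounded {p + q | p q. p \<in> P0 \<and> q \<in> Q0}"
      unfolding P0_def Q0_def by (intro bounded_sumset bounded_ihull)
    have "ktv A s FS JS \<le> ktv A s FS0 JS0 + (D1 * (K1 * d) + D1 * (K3 * (D2 * (K2 * d))))"
      unfolding e1 e2 by (rule inorm_near[OF _ bS0 nS]) (use neP neQ in blast)
    then show "ktv A s FS JS \<le> ktv A s FS0 JS0 + (D1 * K1 + D1 * K3 * D2 * K2) * d"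
      by (simp add: algebra_simps)
  qed
qed



lemma balls_near:
  assumes "S \<subseteq> (\<Union>z\<in>S0. ball z e)"
  shows "near e S S0"
  unfolding near_def
proof
  fix x assume "x \<in> S"
  then obtain z where "z \<in> S0" "dist z x < e" using assms by auto
  then show "\<exists>y\<in>S0. norm (x - y) \<le> e" by (auto simp: dist_norm norm_minus_commute intro!: bexI[of _ z])
qed

lemma Ysb_cbox:
  fixes l u :: "'a::euclidean_space"
  assumes r: "0 < r" and lu: "\<forall>i\<in>Basis. l\<bullet>i \<le> u\<bullet>i"
  shows "{y + r *\<^sub>R b | y b. y \<in> cbox l u \<and> b \<in> cbox (- One) One} = cbox (l - r *\<^sub>R One) (u + r *\<^sub>R One)"
proof
  show "{y + r *\<^sub>R b | y b. y \<in> cbox l u \<and> b \<in> cbox (- One) One} \<subseteq> cbox (l - r *\<^sub>R One) (u + r *\<^sub>R One)"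
  proof
    fix z assume "z \<in> {y + r *\<^sub>R b | y b. y \<in> cbox l u \<and> b \<in> cbox (- One) One}"
    then obtain y b where z: "z = y + r *\<^sub>R b" "y \<in> cbox l u" "b \<in> cbox (- One) One" by blast
    have "l\<bullet>i - r \<le> z\<bullet>i \<and> z\<bullet>i \<le> u\<bullet>i + r" if i: "i\<in>Basis" for i
    proof -
      have "-1 \<le> b\<bullet>i" "b\<bullet>i \<le> 1" using z(3) i by (auto simp: mem_box One_inner inner_minus_left)
      then have "-r \<le> r * (b\<bullet>i)" "r * (b\<bullet>i) \<le> r" using r
        by (metis mult.right_neutral mult_minus_right mult_left_mono less_imp_le)+
      moreover have "l\<bullet>i \<le> y\<bullet>i" "y\<bullet>i \<le> u\<bullet>i" using z(2) i by (auto simp: mem_box)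
      ultimately show ?thesis using z(1) by (simp add: inner_add_left)
    qed
    then show "z \<in> cbox (l - r *\<^sub>R One) (u + r *\<^sub>R One)"
      by (auto simp: mem_box inner_diff_left inner_add_left One_inner)
  qed
next
  show "cbox (l - r *\<^sub>R One) (u + r *\<^sub>R One) \<subseteq> {y + r *\<^sub>R b | y b. y \<in> cbox l u \<and> b \<in> cbox (- One) One}"
  proof
    fix z assume z: "z \<in> cbox (l - r *\<^sub>R One) (u + r *\<^sub>R One)"
    have "\<forall>i\<in>Basis. l\<bullet>i \<le> u\<bullet>i \<and> l\<bullet>i - r \<le> z\<bullet>i \<and> z\<bullet>i \<le> u\<bullet>i + r"
      using z lu by (auto simp: mem_box inner_diff_left inner_add_left One_inner)
    then obtain y where y: "y \<in> cbox l u" "\<forall>i\<in>Basis. \<bar>z\<bullet>i - y\<bullet>i\<bar> \<le> r"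
      using clamp_exists[of l u r z] r by auto
    define b where "b = (1/r) *\<^sub>R (z - y)"
    have zb: "z = y + r *\<^sub>R b" using r by (simp add: b_def)
    have "b \<in> cbox (- One) One"
    proof -
      have "-1 \<le> b\<bullet>i \<and> b\<bullet>i \<le> 1" if i: "i\<in>Basis" for i
      proof -
        have "\<bar>(z - y)\<bullet>i\<bar> \<le> r" using y(2) i by (simp add: inner_diff_left)
        then have "-r \<le> (z - y)\<bullet>i" "(z - y)\<bullet>i \<le> r" by (auto simp: abs_le_iff)
        then show ?thesis using r by (simp add: b_def le_divide_eq divide_le_eq)
      qed
      then show ?thesis by (auto simp: mem_box One_inner inner_minus_left)
    qed
    then show "z \<in> {y + r *\<^sub>R b | y b. y \<in> cbox l u \<and> b \<in> cbox (- One) One}"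
      using zb y(1) by blast
  qed
qed

lemma ihull_sing: "ihull {x::'a::euclidean_space} = {x}"
  unfolding ihull_def by (simp add: euclidean_representation)



theorem mainTheorem2:
  fixes C :: "real^'n \<Rightarrow> real \<Rightarrow> real^'n"
    and J :: "real^'n \<Rightarrow> real \<Rightarrow> real^'n^'n"
    and FX :: "(real^'n) set \<Rightarrow> real set \<Rightarrow> (real^'n) set"
    and JX :: "(real^'n) set \<Rightarrow> real set \<Rightarrow> (real^'n^'n) set"
    and xh :: "real^'n" and xn :: real
    and r \<rho> \<tau> h0 :: real and A :: "real^'n^'n"
    and pred :: "real \<Rightarrow> real \<Rightarrow> real^'n"
  assumes curve: "polynomial_regular_curve C"
    and jac: "\<forall>y t. ((\<lambda>z. C z t) has_derivative (\<lambda>v. J y t *v v)) (at y)"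
    and extC: "interval_extension C FX"
    and extJ: "interval_extension J JX"
    and rho: "0 < \<rho>" "\<rho> \<le> 1/2"
    and tau: "1/2 < \<tau>" "\<tau> < 1"
    and r: "0 < r"
    and h0: "0 < h0"
    and refined: "krawczyk_test FX JX {xh} {xn - r .. xn + r} r A \<rho>"
    and pred0: "\<forall>h>0. pred h 0 = xh"
    and predcont: "\<forall>h>0. continuous_on {0..h} (pred h)"
    and predlim: "((\<lambda>(h, \<eta>). pred h \<eta>) \<longlongrightarrow> xh)
                    (at (0, 0) within {(h, \<eta>). 0 < h \<and> 0 \<le> \<eta> \<and> \<eta> \<le> h})"
  shows "\<exists>k::nat. krawczyk_test FX JX
           (ihull ((\<lambda>\<eta>. if \<eta> < 0 then xh else pred (h0 / 2 ^ k) \<eta>) ` {- r * \<rho> .. h0 / 2 ^ k}))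
           {xn - r * \<rho> .. xn + h0 / 2 ^ k} r A \<tau>"
proof -
  define B where "B = cbox (- One) (One::real^'n)"
  define T0 where "T0 = {xn - r .. xn + r}"
  define lo0 where "lo0 = xh - r *\<^sub>R One"
  define hi0 where "hi0 = xh + r *\<^sub>R One"
  have sing: "{xh} = cbox xh xh" by simp
  have Ysb0: "{y + r *\<^sub>R b | y b. y \<in> {xh} \<and> b \<in> B} = cbox lo0 hi0"
    unfolding sing B_def lo0_def hi0_def by (rule Ysb_cbox[OF r]) auto
  define F0 where "F0 = FX (cbox xh xh) T0"
  define J0 where "J0 = JX (cbox lo0 hi0) T0"
  have abT0: "xn - r \<le> xn + r" using r by simp
  have ne0: "cbox xh xh \<noteq> {}" by simp
  have ne0': "cbox lo0 hi0 \<noteq> {}" using Ysb0 zero_in_B[where 'a="real^'n"] unfolding B_def by blast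
  have bF0: "bounded F0"
    using extC ne0 abT0 unfolding interval_extension_def F0_def T0_def by (metis bounded_cbox)
  have bJ0: "bounded J0"
    using extJ ne0' abT0 unfolding interval_extension_def J0_def T0_def by (metis bounded_cbox)
  have v0: "ktv A r F0 J0 < \<rho>"
    using refined unfolding kt_eq F0_def J0_def T0_def sing[symmetric] Ysb0[unfolded B_def] .
  obtain K where K: "0 \<le> K"
    "\<And>d FS FS0 JS JS0. bounded FS0 \<Longrightarrow> bounded JS0 \<Longrightarrow> FS \<noteq> {} \<Longrightarrow> JS \<noteq> {} \<Longrightarrow>
       near d FS FS0 \<Longrightarrow> near d JS JS0 \<Longrightarrow> ktv A r FS JS \<le> ktv A r FS0 JS0 + K * d"
    using ktv_cont[of A r] by blast
  define \<epsilon> where "\<epsilon> = (\<tau> - \<rho>) / (K + 1)"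
  have eps: "0 < \<epsilon>" using tau rho K(1) by (simp add: \<epsilon>_def)
  have Keps: "K * \<epsilon> < \<tau> - \<rho>"
  proof -
    have "K * \<epsilon> < (K + 1) * \<epsilon>" using eps by simp
    also have "\<dots> = \<tau> - \<rho>" using K(1) by (simp add: \<epsilon>_def)
    finally show ?thesis .
  qed
  obtain \<delta>1 where d1: "\<delta>1 > 0" "\<And>l' u' a' b'. dist l' xh < \<delta>1 \<Longrightarrow> dist u' xh < \<delta>1 \<Longrightarrow>
            \<bar>a' - (xn - r)\<bar> < \<delta>1 \<Longrightarrow> \<bar>b' - (xn + r)\<bar> < \<delta>1 \<Longrightarrow> cbox l' u' \<noteq> {} \<Longrightarrow> a' \<le> b' \<Longrightarrow>
            FX (cbox l' u') {a'..b'} \<subseteq> (\<Union>z\<in>FX (cbox xh xh) {xn - r..xn + r}. ball z \<epsilon>)"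
    using extC ne0 abT0 eps unfolding interval_extension_def by meson
  obtain \<delta>2 where d2: "\<delta>2 > 0" "\<And>l' u' a' b'. dist l' lo0 < \<delta>2 \<Longrightarrow> dist u' hi0 < \<delta>2 \<Longrightarrow>
            \<bar>a' - (xn - r)\<bar> < \<delta>2 \<Longrightarrow> \<bar>b' - (xn + r)\<bar> < \<delta>2 \<Longrightarrow> cbox l' u' \<noteq> {} \<Longrightarrow> a' \<le> b' \<Longrightarrow>
            JX (cbox l' u') {a'..b'} \<subseteq> (\<Union>z\<in>JX (cbox lo0 hi0) {xn - r..xn + r}. ball z \<epsilon>)"
    using extJ ne0' abT0 eps unfolding interval_extension_def by meson
  define \<delta> where "\<delta> = min \<delta>1 \<delta>2"
  have dpos: "0 < \<delta>" using d1 d2 by (simp add: \<delta>_def)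
  define D1 where "D1 = real DIM(real^'n)"
  have D1: "1 \<le> D1" unfolding D1_def by (simp add: DIM_positive Suc_leI)
  define e' where "e' = \<delta> / (2 * D1)"
  have e'pos: "0 < e'" using dpos D1 by (simp add: e'_def)
  have D1e': "D1 * e' < \<delta>" using dpos D1 by (simp add: e'_def)
  obtain d where d: "d > 0" "\<And>p. p \<in> {(h, \<eta>). 0 < h \<and> 0 \<le> \<eta> \<and> \<eta> \<le> h} \<Longrightarrow> p \<noteq> (0,0) \<Longrightarrow> dist p (0,0) < d \<Longrightarrow>
       dist ((\<lambda>(h, \<eta>). pred h \<eta>) p) xh < e'"
    using predlim e'pos unfolding tendsto_iff eventually_at by meson
  obtain k :: nat where k: "(1/2)^k < min (d/2) r / h0"
    using real_arch_pow_inv[of "min (d/2) r / h0" "1/2"] d r h0 by auto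
  define h where "h = h0 / 2 ^ k"
  have hpos: "0 < h" using h0 by (simp add: h_def)
  have hsmall: "h < min (d/2) r"
  proof -
    have "h = h0 * (1/2)^k" by (simp add: h_def power_one_over)
    also have "\<dots> < h0 * (min (d/2) r / h0)" using k h0 by (intro mult_strict_left_mono) auto
    also have "\<dots> = min (d/2) r" using h0 by simp
    finally show ?thesis .
  qed
  define X where "X = (\<lambda>\<eta>. if \<eta> < 0 then xh else pred h \<eta>)"
  define S where "S = X ` {- r * \<rho> .. h}"
  have rr: "0 \<le> r * \<rho>" using r rho by simp
  have Sne: "S \<noteq> {}" unfolding S_def using rr hpos by auto
  have nS: "near e' S {xh}"
    unfolding near_def S_def
  proof
    fix x assume "x \<in> X ` {- r * \<rho> .. h}"
    then obtain \<eta> where \<eta>: "\<eta> \<in> {- r * \<rho> .. h}" "x = X \<eta>" by blast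
    show "\<exists>y\<in>{xh}. norm (x - y) \<le> e'"
    proof (cases "\<eta> < 0")
      case True then show ?thesis using \<eta> e'pos by (simp add: X_def)
    next
      case False
      then have \<eta>0: "0 \<le> \<eta>" "\<eta> \<le> h" using \<eta> by auto
      have "dist (h, \<eta>) (0,0) = sqrt (h\<^sup>2 + \<eta>\<^sup>2)" by (simp add: dist_Pair_Pair)
      also have "\<dots> \<le> sqrt ((h + \<eta>)\<^sup>2)" using hpos \<eta>0 by (intro real_sqrt_le_mono) (simp add: power2_eq_square algebra_simps)
      also have "\<dots> = h + \<eta>" using hpos \<eta>0 by simp
      also have "\<dots> < d" using hsmall \<eta>0 by simp
      finally have "dist (h, \<eta>) (0,0) < d" .
      moreover have "(h, \<eta>) \<noteq> (0,0)" using hpos by simp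
      ultimately have "dist (pred h \<eta>) xh < e'" using d(2)[of "(h, \<eta>)"] hpos \<eta>0 by simp
      then show ?thesis using False \<eta> by (simp add: X_def dist_norm less_imp_le)
    qed
  qed
  have bS: "bounded S" using near_bounded[OF _ nS] by simp
  have nY: "near (D1 * e') (ihull S) {xh}"
    using near_ihull[OF Sne _ nS] unfolding ihull_sing D1_def by simp
  define lo where "lo = (\<Sum>i\<in>Basis. (INF x\<in>S. x \<bullet> i) *\<^sub>R i)"
  define hi where "hi = (\<Sum>i\<in>Basis. (SUP x\<in>S. x \<bullet> i) *\<^sub>R i)"
  have Yeq: "ihull S = cbox lo hi" unfolding ihull_def lo_def hi_def ..
  have Yne: "cbox lo hi \<noteq> {}" using ihull_nonempty[OF bS Sne] Yeq by simp
  have lohi: "\<forall>i\<in>Basis. lo\<bullet>i \<le> hi\<bullet>i" using Yne by (simp add: box_ne_empty)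
  have "lo \<in> cbox lo hi" "hi \<in> cbox lo hi" using lohi by (auto simp: mem_box)
  then have dlo: "dist lo xh < \<delta>" and dhi: "dist hi xh < \<delta>"
    using nY D1e' unfolding Yeq near_def dist_norm by fastforce+
  define T where "T = {xn - r * \<rho> .. xn + h}"
  have abT: "xn - r * \<rho> \<le> xn + h" using rr hpos by simp
  have rho_le: "r * \<rho> \<le> r" using r rho by simp
  have TT0: "T \<subseteq> T0" using rho_le hsmall unfolding T_def T0_def by auto
  have xnT: "xn \<in> T" using rr hpos unfolding T_def by simp
  define Ysb where "Ysb = cbox (lo - r *\<^sub>R One) (hi + r *\<^sub>R One)"
  have Ysb_eq: "{y + r *\<^sub>R b | y b. y \<in> cbox lo hi \<and> b \<in> cbox (- One) One} = Ysb"
    unfolding Ysb_def by (rule Ysb_cbox[OF r lohi])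
  have Ysbne: "Ysb \<noteq> {}" using Ysb_eq Yne zero_in_B[where 'a="real^'n"] by blast
  define FS where "FS = FX (cbox lo hi) T"
  define JS where "JS = JX Ysb T"
  have incC: "\<forall>l u a b x t. x \<in> cbox l u \<longrightarrow> t \<in> {a..b} \<longrightarrow> C x t \<in> FX (cbox l u) {a..b}"
    by (rule conjunct1[OF extC[unfolded interval_extension_def]])
  have incJ: "\<forall>l u a b x t. x \<in> cbox l u \<longrightarrow> t \<in> {a..b} \<longrightarrow> J x t \<in> JX (cbox l u) {a..b}"
    by (rule conjunct1[OF extJ[unfolded interval_extension_def]])
  have FSne: "FS \<noteq> {}"
    using incC \<open>lo \<in> cbox lo hi\<close> xnT unfolding FS_def T_def by blast
  have JSne: "JS \<noteq> {}"
  proof -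
    have "lo - r *\<^sub>R One \<in> Ysb" using lohi r unfolding Ysb_def
      by (auto simp: mem_box inner_diff_left inner_add_left One_inner)
    then show ?thesis
      using incJ xnT unfolding JS_def T_def Ysb_def by blast
  qed
  have FSsub: "FS \<subseteq> FX (cbox lo hi) T0"
    using extC Yne abT TT0 unfolding interval_extension_def FS_def T_def T0_def by blast
  also have "\<dots> \<subseteq> (\<Union>z\<in>F0. ball z \<epsilon>)"
    unfolding T0_def F0_def T0_def
    by (rule d1(2)) (use dlo dhi Yne abT0 d1(1) \<delta>_def in auto)
  finally have nF: "near \<epsilon> FS F0" by (rule balls_near)
  have JSsub: "JS \<subseteq> JX Ysb T0"
    using extJ Ysbne abT TT0 unfolding interval_extension_def JS_def T_def T0_def Ysb_def by blast
  also have "\<dots> \<subseteq> (\<Union>z\<in>J0. ball z \<epsilon>)"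
  proof -
    have "dist (lo - r *\<^sub>R One) lo0 = dist lo xh" "dist (hi + r *\<^sub>R One) hi0 = dist hi xh"
      unfolding lo0_def hi0_def dist_norm by (simp_all add: algebra_simps)
    then show ?thesis
      unfolding T0_def J0_def Ysb_def
      by (intro d2(2)) (use dlo dhi Ysbne abT0 d2(1) \<delta>_def Ysb_def in auto)
  qed
  finally have nJ: "near \<epsilon> JS J0" by (rule balls_near)
  have "ktv A r FS JS \<le> ktv A r F0 J0 + K * \<epsilon>" by (rule K(2)[OF bF0 bJ0 FSne JSne nF nJ])
  then have "ktv A r FS JS < \<tau>" using v0 Keps by linarith
  then have "krawczyk_test FX JX (ihull S) T r A \<tau>"
    unfolding kt_eq Yeq Ysb_eq FS_def JS_def .
  then show ?thesis unfolding S_def X_def T_def h_def by blast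
qed


end
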